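(* Let $F\colon\mathbb{N}\to(0,\infty)$ be strictly monotone with $\sum_{k=1}^\infty1/F(k)<\infty$, and let $\Xi$ be the birth process with rate function $F$ and initial value $\Xi(0)\in\mathbb{N}$, with sojourn times $\tau(k)$ and explosion time $T$. Then for all $x\ge\Xi(0)$, $$\mathbb{P}(\Xi(t)>x\mid T>t)\to1-\prod_{k=x+1}^\infty\Big(1-\frac{F(\Xi(0))}{F(k)}\Big)\in(0,1)\quad\text{as }t\to\infty.$$ Moreover, there are constants $C<\infty$ and $t_1$ such that for all $t\ge t_1$ and all $s>0$, $$\mathbb{P}\big(T-\tau(\Xi(0))>s\mid T>t\big)\le C\,e^{-(F(\Xi(0)+1)-F(\Xi(0)))s}.$$
   Context: $\mathbb{N}=\{1,2,\dots\}$. The sojourn times $\tau(k)$, $k\ge\Xi(0)$, are independent, $\tau(k)$ exponential with rate $F(k)$; $\Xi(t)=\min\{k:\sum_{l=\Xi(0)}^k\tau(l)>t\}$ (min of empty set $=\infty$) and $T=\sum_{k\ge\Xi(0)}\tau(k)$. *)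

theory Defs
  imports "HOL-Probability.Probability"
begin

definition cprob :: "'a measure \<Rightarrow> 'a set \<Rightarrow> 'a set \<Rightarrow> real" where
  "cprob M A B = measure M (A \<inter> B) / measure M B"

definition birth_Xi :: "nat \<Rightarrow> (nat \<Rightarrow> 'a \<Rightarrow> real) \<Rightarrow> real \<Rightarrow> 'a \<Rightarrow> enat" where
  "birth_Xi n0 \<tau> t \<omega> =
     (if \<exists>k\<ge>n0. (\<Sum>l=n0..k. \<tau> l \<omega>) > t
      then enat (LEAST k. k \<ge> n0 \<and> (\<Sum>l=n0..k. \<tau> l \<omega>) > t) else \<infinity>)"

definition birth_T :: "nat \<Rightarrow> (nat \<Rightarrow> 'a \<Rightarrow> real) \<Rightarrow> 'a \<Rightarrow> ennreal" where
  "birth_T n0 \<tau> \<omega> = (\<Sum>j. ennreal (\<tau> (n0 + j) \<omega>))"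

end

theory Submission
  imports Defs "HOL-Probability.Probability" begin

lemma exp1d:
  fixes \<mu> \<nu> a :: real
  assumes mu: "0 < \<mu>" and nu: "\<nu> < \<mu>"
  shows "(\<integral>\<^sup>+e. ennreal (exponential_density \<mu> e) * (indicator {a<..} e * ennreal (exp (\<nu> * e))) \<partial>lborel)
         = ennreal (\<mu> / (\<mu> - \<nu>) * exp (- (\<mu> - \<nu>) * max 0 a))"
proof -
  define b where "b = max 0 a"
  have "(\<integral>\<^sup>+e. ennreal (exponential_density \<mu> e) * (indicator {a<..} e * ennreal (exp (\<nu> * e))) \<partial>lborel)
      = (\<integral>\<^sup>+e. ennreal (indicator {b..} e * (\<mu> * exp (- (\<mu> - \<nu>) * e))) \<partial>lborel)"
  proof (rule nn_integral_cong_AE)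
    show "AE e in lborel. ennreal (exponential_density \<mu> e) * (indicator {a<..} e * ennreal (exp (\<nu> * e)))
       = ennreal (indicator {b..} e * (\<mu> * exp (- (\<mu> - \<nu>) * e)))"
      using AE_lborel_singleton[of b]
    proof eventually_elim
      case (elim e)
      have ex: "exp (- \<mu> * e) * exp (\<nu> * e) = exp (- (\<mu> - \<nu>) * e)"
        by (simp add: exp_add[symmetric] algebra_simps)
      show ?case using elim mu ex
        by (auto simp: exponential_density_def erlang_density_def b_def indicator_def ennreal_mult[symmetric] max_def mult.assoc split: if_splits)
    qed
  qed
  also have "\<dots> = ennreal (\<mu> * (exp (- (\<mu> - \<nu>) * b) / (\<mu> - \<nu>)))"
  proof -
    have "((\<lambda>x. \<mu> * exp (- (\<mu> - \<nu>) * x)) has_integral \<mu> * (exp (- (\<mu> - \<nu>) * b) / (\<mu> - \<nu>))) {b..}"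
      using has_integral_exp_minus_to_infinity[of "\<mu> - \<nu>" b] nu
      by (intro has_integral_mult_right) simp
    from nn_integral_has_integral_lebesgue[OF _ this] mu show ?thesis
      by (simp add: ennreal_indicator[symmetric] ennreal_mult'' )
  qed
  also have "\<dots> = ennreal (\<mu> / (\<mu> - \<nu>) * exp (- (\<mu> - \<nu>) * max 0 a))"
    by (simp add: b_def)
  finally show ?thesis .
qed

lemma exp_mgf1:
  fixes \<mu> \<nu> :: real
  assumes mu: "0 < \<mu>" and nu: "\<nu> < \<mu>"
  shows "(\<integral>\<^sup>+e. ennreal (exponential_density \<mu> e) * ennreal (exp (\<nu> * e)) \<partial>lborel) = ennreal (\<mu> / (\<mu> - \<nu>))"
proof -
  have "(\<integral>\<^sup>+e. ennreal (exponential_density \<mu> e) * ennreal (exp (\<nu> * e)) \<partial>lborel)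
     = (\<integral>\<^sup>+e. ennreal (exponential_density \<mu> e) * (indicator {-1<..} e * ennreal (exp (\<nu> * e))) \<partial>lborel)"
    by (rule nn_integral_cong) (auto simp: exponential_density_def erlang_density_def indicator_def)
  also have "\<dots> = ennreal (\<mu> / (\<mu> - \<nu>))" using exp1d[OF mu nu, of "-1"] by simp
  finally show ?thesis .
qed

lemma GL:
  fixes f :: "real \<Rightarrow> real"
  assumes "\<exists>t1. \<forall>t\<ge>t1. f t \<le> L" "\<And>a. a < L \<Longrightarrow> \<exists>t0. \<forall>t\<ge>t0. a < f t"
  shows "(f \<longlongrightarrow> L) at_top"
proof (rule order_tendstoI)
  fix a assume "a < L"
  then obtain t0 where "\<forall>t\<ge>t0. a < f t" using assms(2) by blast
  then show "eventually (\<lambda>t. a < f t) at_top" unfolding eventually_at_top_linorder by blast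
next
  fix b assume "L < b"
  obtain t1 where "\<forall>t\<ge>t1. f t \<le> L" using assms(1) by blast
  then show "eventually (\<lambda>t. f t < b) at_top" using \<open>L < b\<close> unfolding eventually_at_top_linorder
    by (auto intro: le_less_trans)
qed

locale bp = prob_space M for M :: "'a measure" +
  fixes G :: "nat \<Rightarrow> real" and \<sigma> :: "nat \<Rightarrow> 'a \<Rightarrow> real"
  assumes Gpos: "\<And>j. 0 < G j" and Gmono: "strict_mono G" and Gsum: "summable (\<lambda>j. 1 / G j)"
  and \<sigma>nn: "\<And>j \<omega>. 0 \<le> \<sigma> j \<omega>"
  and indep: "indep_vars (\<lambda>_. borel) \<sigma> UNIV"
  and expo: "\<And>j. distributed M lborel (\<sigma> j) (exponential_density (G j))"
begin

lemma meas[measurable]: "\<sigma> j \<in> borel_measurable M"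
  using distributed_measurable[OF expo[of j]] by simp

lemma LA0:
  assumes I: "finite I" "i \<notin> I" and g[measurable]: "g \<in> borel_measurable (borel \<Otimes>\<^sub>M borel)"
  shows "(\<integral>\<^sup>+\<omega>. g (\<sigma> i \<omega>, \<Sum>j\<in>I. \<sigma> j \<omega>) \<partial>M)
       = (\<integral>\<^sup>+\<omega>. (\<integral>\<^sup>+e. ennreal (exponential_density (G i) e) * g (e, \<Sum>j\<in>I. \<sigma> j \<omega>) \<partial>lborel) \<partial>M)"
proof -
  define V where "V = (\<lambda>\<omega>. \<Sum>j\<in>I. \<sigma> j \<omega>)"
  have [measurable]: "V \<in> borel_measurable M" unfolding V_def by measurable
  have ind: "indep_var borel (\<sigma> i) borel V"
    unfolding V_def using indep_vars_sum[OF I indep_vars_subset[OF indep]] by auto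
  interpret D1: prob_space "distr M borel (\<sigma> i)" by (rule prob_space_distr) simp
  interpret D2: prob_space "distr M borel V" by (rule prob_space_distr) simp
  interpret P: pair_sigma_finite "distr M borel (\<sigma> i)" "distr M borel V" ..
  have eq: "distr M borel (\<sigma> i) \<Otimes>\<^sub>M distr M borel V = distr M (borel \<Otimes>\<^sub>M borel) (\<lambda>\<omega>. (\<sigma> i \<omega>, V \<omega>))"
    using ind indep_var_distribution_eq by blast
  have "(\<integral>\<^sup>+\<omega>. g (\<sigma> i \<omega>, V \<omega>) \<partial>M) = (\<integral>\<^sup>+p. g p \<partial>distr M (borel \<Otimes>\<^sub>M borel) (\<lambda>\<omega>. (\<sigma> i \<omega>, V \<omega>)))"
    by (subst nn_integral_distr) auto
  also have "\<dots> = (\<integral>\<^sup>+p. g p \<partial>(distr M borel (\<sigma> i) \<Otimes>\<^sub>M distr M borel V))" by (simp add: eq)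
  also have "\<dots> = (\<integral>\<^sup>+v. (\<integral>\<^sup>+e. g (e,v) \<partial>distr M borel (\<sigma> i)) \<partial>distr M borel V)"
    by (rule P.nn_integral_snd[symmetric]) simp
  also have "\<dots> = (\<integral>\<^sup>+\<omega>. (\<integral>\<^sup>+e. g (e, V \<omega>) \<partial>distr M borel (\<sigma> i)) \<partial>M)"
    by (subst nn_integral_distr) auto
  also have "\<dots> = (\<integral>\<^sup>+\<omega>. (\<integral>\<^sup>+e. ennreal (exponential_density (G i) e) * g (e, V \<omega>) \<partial>lborel) \<partial>M)"
  proof (rule nn_integral_cong)
    fix \<omega> 
    have "(\<integral>\<^sup>+e. g (e, V \<omega>) \<partial>distr M borel (\<sigma> i)) = (\<integral>\<^sup>+x. g (\<sigma> i x, V \<omega>) \<partial>M)"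
      by (subst nn_integral_distr) auto
    also have "\<dots> = (\<integral>\<^sup>+e. g (e, V \<omega>) \<partial>distr M lborel (\<sigma> i))"
      by (subst nn_integral_distr) auto
    also have "\<dots> = (\<integral>\<^sup>+e. g (e, V \<omega>) \<partial>density lborel (exponential_density (G i)))"
      using distributed_distr_eq_density[OF expo[of i]] by simp
    also have "\<dots> = (\<integral>\<^sup>+e. ennreal (exponential_density (G i) e) * g (e, V \<omega>) \<partial>lborel)"
      by (subst nn_integral_density) auto
    finally show "(\<integral>\<^sup>+e. g (e, V \<omega>) \<partial>distr M borel (\<sigma> i)) = (\<integral>\<^sup>+e. ennreal (exponential_density (G i) e) * g (e, V \<omega>) \<partial>lborel)" .
  qed
  finally show ?thesis unfolding V_def .
qed

lemma mgf:
  assumes "finite K" "\<forall>j\<in>K. \<nu> < G j"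
  shows "(\<integral>\<^sup>+\<omega>. ennreal (exp (\<nu> * (\<Sum>j\<in>K. \<sigma> j \<omega>))) \<partial>M) = (\<Prod>j\<in>K. ennreal (G j / (G j - \<nu>)))"
  using assms
proof (induction K rule: finite_induct)
  case empty
  then show ?case by (simp add: emeasure_space_1)
next
  case (insert i K)
  have "(\<integral>\<^sup>+\<omega>. ennreal (exp (\<nu> * (\<Sum>j\<in>insert i K. \<sigma> j \<omega>))) \<partial>M)
      = (\<integral>\<^sup>+\<omega>. (\<lambda>p. ennreal (exp (\<nu> * (fst p + snd p)))) (\<sigma> i \<omega>, \<Sum>j\<in>K. \<sigma> j \<omega>) \<partial>M)"
    using insert by simp
  also have "\<dots> = (\<integral>\<^sup>+\<omega>. (\<integral>\<^sup>+e. ennreal (exponential_density (G i) e) * ennreal (exp (\<nu> * (e + (\<Sum>j\<in>K. \<sigma> j \<omega>)))) \<partial>lborel) \<partial>M)"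
    by (subst LA0) (use insert in auto)
  also have "\<dots> = (\<integral>\<^sup>+\<omega>. ennreal (G i / (G i - \<nu>)) * ennreal (exp (\<nu> * (\<Sum>j\<in>K. \<sigma> j \<omega>))) \<partial>M)"
  proof (rule nn_integral_cong)
    fix \<omega>
    have "(\<integral>\<^sup>+e. ennreal (exponential_density (G i) e) * ennreal (exp (\<nu> * (e + (\<Sum>j\<in>K. \<sigma> j \<omega>)))) \<partial>lborel)
        = (\<integral>\<^sup>+e. (ennreal (exponential_density (G i) e) * ennreal (exp (\<nu> * e))) * ennreal (exp (\<nu> * (\<Sum>j\<in>K. \<sigma> j \<omega>))) \<partial>lborel)"
      by (rule nn_integral_cong) (simp add: distrib_left exp_add ennreal_mult' mult_ac)
    also have "\<dots> = (\<integral>\<^sup>+e. ennreal (exponential_density (G i) e) * ennreal (exp (\<nu> * e)) \<partial>lborel) * ennreal (exp (\<nu> * (\<Sum>j\<in>K. \<sigma> j \<omega>)))"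
      by (rule nn_integral_multc) simp
    also have "\<dots> = ennreal (G i / (G i - \<nu>)) * ennreal (exp (\<nu> * (\<Sum>j\<in>K. \<sigma> j \<omega>)))"
      using exp_mgf1[OF Gpos[of i], of \<nu>] insert.prems by simp
    finally show "(\<integral>\<^sup>+e. ennreal (exponential_density (G i) e) * ennreal (exp (\<nu> * (e + (\<Sum>j\<in>K. \<sigma> j \<omega>)))) \<partial>lborel) = ennreal (G i / (G i - \<nu>)) * ennreal (exp (\<nu> * (\<Sum>j\<in>K. \<sigma> j \<omega>)))" .
  qed
  also have "\<dots> = ennreal (G i / (G i - \<nu>)) * (\<integral>\<^sup>+\<omega>. ennreal (exp (\<nu> * (\<Sum>j\<in>K. \<sigma> j \<omega>))) \<partial>M)"
    by (rule nn_integral_cmult) simp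
  also have "\<dots> = (\<Prod>j\<in>insert i K. ennreal (G j / (G j - \<nu>)))"
    using insert by simp
  finally show ?case .
qed

lemma Gle: "i \<le> j \<Longrightarrow> G i \<le> G j"
  using Gmono by (metis le_less strict_mono_less)

lemma prodfacts:
  assumes nu: "0 \<le> \<nu>" "\<nu> < G k"
  shows "convergent_prod (\<lambda>j. 1 - \<nu> / G (k + j))"
    and "0 < (\<Prod>j. 1 - \<nu> / G (k + j))"
    and "\<And>n. (\<Prod>j. 1 - \<nu> / G (k + j)) \<le> (\<Prod>j<n. 1 - \<nu> / G (k + j))"
    and "(\<Prod>j. 1 - \<nu> / G (k + j)) \<le> 1 - \<nu> / G k"
    and "(\<lambda>n. \<Prod>j<n. 1 - \<nu> / G (k + j)) \<longlonglongrightarrow> (\<Prod>j. 1 - \<nu> / G (k + j))"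
proof -
  have fpos: "0 < 1 - \<nu> / G (k + j)" for j
    using Gle[of k "k+j"] nu Gpos[of "k+j"] by (simp add: field_simps)
  have fle: "1 - \<nu> / G (k + j) \<le> 1" for j
    using nu Gpos[of "k+j"] by simp
  have "summable (\<lambda>j. 1 / G (j + k))"
    using summable_ignore_initial_segment[OF Gsum, of k] by simp
  then have "summable (\<lambda>j. \<nu> * (1 / G (j + k)))" by (rule summable_mult)
  then have "summable (\<lambda>j. norm ((1 - \<nu> / G (k + j)) - 1))"
    using nu Gpos by (simp add: add.commute abs_of_nonneg less_imp_le)
  then show conv: "convergent_prod (\<lambda>j. 1 - \<nu> / G (k + j))"
    by (intro abs_convergent_prod_imp_convergent_prod summable_imp_abs_convergent_prod)
  show "0 < (\<Prod>j. 1 - \<nu> / G (k + j))"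
    by (rule less_0_prodinf[OF conv fpos])
  have hp: "(\<lambda>j. 1 - \<nu> / G (k + j)) has_prod (\<Prod>j. 1 - \<nu> / G (k + j))"
    using conv convergent_prod_has_prod_iff by blast
  show le: "(\<Prod>j. 1 - \<nu> / G (k + j)) \<le> (\<Prod>j<n. 1 - \<nu> / G (k + j))" for n
    by (rule prod_ge_prodinf[OF hp]) (use fpos fle in \<open>auto intro: less_imp_le\<close>)
  show "(\<Prod>j. 1 - \<nu> / G (k + j)) \<le> 1 - \<nu> / G k"
    using le[of 1] by simp
  show "(\<lambda>n. \<Prod>j<n. 1 - \<nu> / G (k + j)) \<longlonglongrightarrow> (\<Prod>j. 1 - \<nu> / G (k + j))"
    by (rule has_prod_imp_tendsto'[OF hp])
qed

lemma mgf_shift: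
  assumes "\<nu> < G k"
  shows "(\<integral>\<^sup>+\<omega>. ennreal (exp (\<nu> * (\<Sum>i<n. \<sigma> (k+i) \<omega>))) \<partial>M) = ennreal (\<Prod>i<n. G (k+i) / (G (k+i) - \<nu>))"
proof -
  have inj: "inj_on ((+) k) {..<n}" by simp
  have "(\<integral>\<^sup>+\<omega>. ennreal (exp (\<nu> * (\<Sum>i<n. \<sigma> (k+i) \<omega>))) \<partial>M)
      = (\<integral>\<^sup>+\<omega>. ennreal (exp (\<nu> * (\<Sum>j\<in>(+) k ` {..<n}. \<sigma> j \<omega>))) \<partial>M)"
    by (simp add: sum.reindex[OF inj])
  also have "\<dots> = (\<Prod>j\<in>(+) k ` {..<n}. ennreal (G j / (G j - \<nu>)))"
    by (rule mgf) (use assms Gle in \<open>auto intro: less_le_trans\<close>)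
  also have "\<dots> = (\<Prod>i<n. ennreal (G (k+i) / (G (k+i) - \<nu>)))"
    by (simp add: prod.reindex[OF inj])
  also have "\<dots> = ennreal (\<Prod>i<n. G (k+i) / (G (k+i) - \<nu>))"
  proof (intro prod_ennreal less_imp_le divide_pos_pos)
    fix i show "0 < G (k+i)" by (rule Gpos)
    show "0 < G (k+i) - \<nu>" using assms Gle[of k "k+i"] by simp
  qed
  finally show ?thesis .
qed

lemma tail:
  "ennreal (exp (G 0 * t)) * emeasure M {\<omega>\<in>space M. t < \<sigma> 0 \<omega> + (\<Sum>i<n. \<sigma> (Suc i) \<omega>)}
   = (\<integral>\<^sup>+\<omega>. ennreal (min (exp (G 0 * t)) (exp (G 0 * (\<Sum>i<n. \<sigma> (Suc i) \<omega>)))) \<partial>M)"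
proof -
  let ?I = "Suc ` {..<n}"
  have W: "(\<Sum>j\<in>?I. \<sigma> j \<omega>) = (\<Sum>i<n. \<sigma> (Suc i) \<omega>)" for \<omega>
    by (subst sum.reindex) auto
  define g where "g = (\<lambda>p::real\<times>real. ennreal (exp (G 0 * t)) * indicator {p. t < fst p + snd p} p)"
  have [measurable]: "g \<in> borel_measurable (borel \<Otimes>\<^sub>M borel)" unfolding g_def by measurable
  have "ennreal (exp (G 0 * t)) * emeasure M {\<omega>\<in>space M. t < \<sigma> 0 \<omega> + (\<Sum>i<n. \<sigma> (Suc i) \<omega>)}
      = (\<integral>\<^sup>+\<omega>. ennreal (exp (G 0 * t)) * indicator {\<omega>\<in>space M. t < \<sigma> 0 \<omega> + (\<Sum>i<n. \<sigma> (Suc i) \<omega>)} \<omega> \<partial>M)"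
    by (rule nn_integral_cmult_indicator[symmetric]) measurable
  also have "\<dots> = (\<integral>\<^sup>+\<omega>. g (\<sigma> 0 \<omega>, \<Sum>j\<in>?I. \<sigma> j \<omega>) \<partial>M)"
    by (rule nn_integral_cong) (simp add: g_def W indicator_def)
  also have "\<dots> = (\<integral>\<^sup>+\<omega>. (\<integral>\<^sup>+e. ennreal (exponential_density (G 0) e) * g (e, \<Sum>j\<in>?I. \<sigma> j \<omega>) \<partial>lborel) \<partial>M)"
    by (rule LA0) auto
  also have "\<dots> = (\<integral>\<^sup>+\<omega>. ennreal (min (exp (G 0 * t)) (exp (G 0 * (\<Sum>i<n. \<sigma> (Suc i) \<omega>)))) \<partial>M)"
  proof (rule nn_integral_cong)
    fix \<omega>
    define v where "v = (\<Sum>i<n. \<sigma> (Suc i) \<omega>)"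
    have "(\<integral>\<^sup>+e. ennreal (exponential_density (G 0) e) * g (e, v) \<partial>lborel)
        = (\<integral>\<^sup>+e. (ennreal (exponential_density (G 0) e) * (indicator {t - v<..} e * ennreal (exp (0 * e)))) * ennreal (exp (G 0 * t)) \<partial>lborel)"
      by (rule nn_integral_cong) (auto simp: g_def indicator_def)
    also have "\<dots> = (\<integral>\<^sup>+e. ennreal (exponential_density (G 0) e) * (indicator {t - v<..} e * ennreal (exp (0 * e))) \<partial>lborel) * ennreal (exp (G 0 * t))"
      by (rule nn_integral_multc) simp
    also have "\<dots> = ennreal (exp (- G 0 * max 0 (t - v))) * ennreal (exp (G 0 * t))"
      using exp1d[OF Gpos[of 0], of 0 "t - v"] Gpos[of 0] by simp
    also have "\<dots> = ennreal (min (exp (G 0 * t)) (exp (G 0 * v)))"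
    proof -
      have "exp (- G 0 * max 0 (t - v)) * exp (G 0 * t) = min (exp (G 0 * t)) (exp (G 0 * v))"
      proof (cases "t \<le> v")
        case True
        then have "G 0 * t \<le> G 0 * v" using Gpos[of 0] by (simp add: mult_left_mono)
        then show ?thesis using True by (simp add: min_def)
      next
        case False
        then have "G 0 * v \<le> G 0 * t" using Gpos[of 0] by (simp add: mult_left_mono)
        moreover have "exp (- G 0 * (t - v)) * exp (G 0 * t) = exp (G 0 * v)"
          by (simp add: exp_add[symmetric] algebra_simps)
        ultimately show ?thesis using False by (simp add: min_def)
      qed
      then show ?thesis by (simp add: ennreal_mult'[symmetric])
    qed
    finally show "(\<integral>\<^sup>+e. ennreal (exponential_density (G 0) e) * g (e, \<Sum>j\<in>?I. \<sigma> j \<omega>) \<partial>lborel)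
       = ennreal (min (exp (G 0 * t)) (exp (G 0 * (\<Sum>i<n. \<sigma> (Suc i) \<omega>))))"
      by (simp add: W v_def)
  qed
  finally show ?thesis .
qed

lemma F1:
  "((\<lambda>t. exp (G 0 * t) * measure M {\<omega>\<in>space M. t < \<sigma> 0 \<omega> + (\<Sum>i<n. \<sigma> (Suc i) \<omega>)})
     \<longlongrightarrow> (\<Prod>i<n. G (Suc i) / (G (Suc i) - G 0))) at_top"
proof -
  define Q where "Q = (\<Prod>i<n. G (Suc i) / (G (Suc i) - G 0))"
  define W where "W = (\<lambda>\<omega>. \<Sum>i<n. \<sigma> (Suc i) \<omega>)"
  have [measurable]: "W \<in> borel_measurable M" unfolding W_def by measurable
  define f where "f = (\<lambda>t. exp (G 0 * t) * measure M {\<omega>\<in>space M. t < \<sigma> 0 \<omega> + W \<omega>})"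
  have Qpos: "0 < Q" unfolding Q_def
  proof (intro prod_pos divide_pos_pos)
    fix i show "0 < G (Suc i)" by (rule Gpos)
    show "0 < G (Suc i) - G 0" using Gmono by (simp add: strict_mono_def)
  qed
  have hQ: "(\<integral>\<^sup>+\<omega>. ennreal (exp (G 0 * W \<omega>)) \<partial>M) = ennreal Q"
    using mgf_shift[of "G 0" 1 n] Gmono unfolding W_def Q_def by (simp add: strict_mono_def)
  have key: "ennreal (f t) = (\<integral>\<^sup>+\<omega>. ennreal (min (exp (G 0 * t)) (exp (G 0 * W \<omega>))) \<partial>M)" for t
    using tail[of t n] unfolding f_def W_def
    by (simp add: emeasure_eq_measure ennreal_mult')
  have fnn: "0 \<le> f t" for t unfolding f_def by simp
  have fup: "f t \<le> Q" for t
  proof -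
    have "ennreal (f t) \<le> (\<integral>\<^sup>+\<omega>. ennreal (exp (G 0 * W \<omega>)) \<partial>M)"
      unfolding key by (intro nn_integral_mono) auto
    then show ?thesis using hQ Qpos by (simp add: ennreal_le_iff less_imp_le)
  qed
  have mono_t: "ennreal (f s) \<le> ennreal (f t)" if "s \<le> t" for s t
  proof -
    have "G 0 * s \<le> G 0 * t" using that Gpos[of 0] by (simp add: mult_left_mono)
    then show ?thesis unfolding key by (intro nn_integral_mono ennreal_leI min.mono) auto
  qed
  have "(f \<longlongrightarrow> Q) at_top"
  proof (rule GL)
    show "\<exists>t1. \<forall>t\<ge>t1. f t \<le> Q" using fup by blast
  next
    fix a assume a: "a < Q"
    show "\<exists>t0. \<forall>t\<ge>t0. a < f t"
    proof (cases "a < 0")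
      case True then show ?thesis using fnn by (auto intro: less_le_trans)
    next
      case False
      have sup: "(SUP m::nat. ennreal (min (exp (G 0 * real m)) (exp (G 0 * w)))) = ennreal (exp (G 0 * w))" for w
      proof (rule antisym)
        show "(SUP m::nat. ennreal (min (exp (G 0 * real m)) (exp (G 0 * w)))) \<le> ennreal (exp (G 0 * w))"
          by (intro SUP_least ennreal_leI) simp
        have "w \<le> real (nat \<lceil>w\<rceil>)" by linarith
        then have "G 0 * w \<le> G 0 * real (nat \<lceil>w\<rceil>)" using Gpos[of 0] by (simp add: mult_left_mono)
        then show "ennreal (exp (G 0 * w)) \<le> (SUP m::nat. ennreal (min (exp (G 0 * real m)) (exp (G 0 * w))))"
          by (intro SUP_upper2[of "nat \<lceil>w\<rceil>"]) auto
      qed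
      have inc: "incseq (\<lambda>m::nat. \<lambda>\<omega>. ennreal (min (exp (G 0 * real m)) (exp (G 0 * W \<omega>))))"
      proof (unfold incseq_def le_fun_def, intro allI impI ennreal_leI)
        fix m n :: nat and x assume "m \<le> n"
        then have "G 0 * real m \<le> G 0 * real n" using Gpos[of 0] by (simp add: mult_left_mono)
        then show "min (exp (G 0 * real m)) (exp (G 0 * W x)) \<le> min (exp (G 0 * real n)) (exp (G 0 * W x))"
          by (intro min.mono) auto
      qed
      have "ennreal a < ennreal Q" using False a by (simp add: ennreal_less_iff)
      also have "ennreal Q = (\<integral>\<^sup>+\<omega>. (SUP m::nat. ennreal (min (exp (G 0 * real m)) (exp (G 0 * W \<omega>)))) \<partial>M)"
        unfolding sup hQ ..
      also have "\<dots> = (SUP m::nat. (\<integral>\<^sup>+\<omega>. ennreal (min (exp (G 0 * real m)) (exp (G 0 * W \<omega>))) \<partial>M))"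
        by (rule nn_integral_monotone_convergence_SUP[OF inc]) simp
      finally obtain m :: nat where m: "ennreal a < ennreal (f (real m))"
        unfolding key by (auto simp: less_SUP_iff)
      show ?thesis
      proof (intro exI allI impI)
        fix t assume "real m \<le> t"
        then have "ennreal a < ennreal (f t)" using m mono_t by (blast intro: less_le_trans)
        then show "a < f t" using False by (simp add: ennreal_less_iff)
      qed
    qed
  qed
  then show ?thesis unfolding f_def W_def Q_def .
qed

lemma Qfacts:
  assumes nu: "0 \<le> \<nu>" "\<nu> < G k"
  shows "\<And>n. (\<Prod>i<n. G (k+i) / (G (k+i) - \<nu>)) = 1 / (\<Prod>i<n. 1 - \<nu> / G (k+i))"
    and "\<And>n. (\<Prod>i<n. G (k+i) / (G (k+i) - \<nu>)) \<le> 1 / (\<Prod>j. 1 - \<nu> / G (k + j))"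
    and "(\<lambda>n. \<Prod>i<n. G (k+i) / (G (k+i) - \<nu>)) \<longlonglongrightarrow> 1 / (\<Prod>j. 1 - \<nu> / G (k + j))"
proof -
  have d: "G (k+i) - \<nu> > 0" for i using Gle[of k "k+i"] nu by simp
  have eq: "G (k+i) / (G (k+i) - \<nu>) = 1 / (1 - \<nu> / G (k+i))" for i
    using d[of i] Gpos[of "k+i"] by (simp add: field_simps)
  show eqn: "(\<Prod>i<n. G (k+i) / (G (k+i) - \<nu>)) = 1 / (\<Prod>i<n. 1 - \<nu> / G (k+i))" for n
    unfolding eq by (simp add: prod_dividef)
  note pf = prodfacts[OF nu]
  show "(\<Prod>i<n. G (k+i) / (G (k+i) - \<nu>)) \<le> 1 / (\<Prod>j. 1 - \<nu> / G (k + j))" for n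
    unfolding eqn using pf(2) pf(3)[of n] by (intro divide_left_mono) auto
  show "(\<lambda>n. \<Prod>i<n. G (k+i) / (G (k+i) - \<nu>)) \<longlonglongrightarrow> 1 / (\<Prod>j. 1 - \<nu> / G (k + j))"
    unfolding eqn using pf(2) by (intro tendsto_divide tendsto_const pf(5)) auto
qed

lemma Tset:
  assumes "0 \<le> t"
  shows "(ennreal t < (\<Sum>j. ennreal (\<sigma> j \<omega>))) \<longleftrightarrow> (\<exists>n. t < \<sigma> 0 \<omega> + (\<Sum>i<n. \<sigma> (Suc i) \<omega>))"
proof -
  have "(\<Sum>j. ennreal (\<sigma> j \<omega>)) = (SUP n. ennreal (\<Sum>j<n. \<sigma> j \<omega>))"
    unfolding suminf_eq_SUP using \<sigma>nn by simp
  then have "(ennreal t < (\<Sum>j. ennreal (\<sigma> j \<omega>))) \<longleftrightarrow> (\<exists>n. t < (\<Sum>j<n. \<sigma> j \<omega>))"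
    using assms by (simp add: less_SUP_iff ennreal_less_iff)
  also have "\<dots> \<longleftrightarrow> (\<exists>n. t < (\<Sum>j<Suc n. \<sigma> j \<omega>))"
  proof
    assume "\<exists>n. t < (\<Sum>j<n. \<sigma> j \<omega>)"
    then obtain n where n: "t < (\<Sum>j<n. \<sigma> j \<omega>)" by blast
    then have "n \<noteq> 0" using assms by (cases n) auto
    then obtain m where "n = Suc m" by (cases n) auto
    then show "\<exists>n. t < (\<Sum>j<Suc n. \<sigma> j \<omega>)" using n by blast
  qed blast
  also have "\<dots> \<longleftrightarrow> (\<exists>n. t < \<sigma> 0 \<omega> + (\<Sum>i<n. \<sigma> (Suc i) \<omega>))"
    by (simp only: sum.lessThan_Suc_shift)
  finally show ?thesis .
qed

lemma Yset:
  assumes "0 \<le> s"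
  shows "(ennreal s < (\<Sum>j. ennreal (\<sigma> (Suc j) \<omega>))) \<longleftrightarrow> (\<exists>n. s < (\<Sum>i<n. \<sigma> (Suc i) \<omega>))"
proof -
  have "(\<Sum>j. ennreal (\<sigma> (Suc j) \<omega>)) = (SUP n. ennreal (\<Sum>j<n. \<sigma> (Suc j) \<omega>))"
    unfolding suminf_eq_SUP using \<sigma>nn by simp
  then show ?thesis
    using assms by (simp add: less_SUP_iff ennreal_less_iff)
qed

lemma Wmono: "n \<le> m \<Longrightarrow> (\<Sum>i<n. \<sigma> (Suc i) \<omega>) \<le> (\<Sum>i<m. \<sigma> (Suc i) \<omega>)"
  by (rule sum_mono2) (use \<sigma>nn in auto)

lemma F1up:
  "exp (G 0 * t) * measure M {\<omega>\<in>space M. t < \<sigma> 0 \<omega> + (\<Sum>i<n. \<sigma> (Suc i) \<omega>)}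
     \<le> (\<Prod>i<n. G (Suc i) / (G (Suc i) - G 0))"
proof -
  have Qpos: "0 \<le> (\<Prod>i<n. G (Suc i) / (G (Suc i) - G 0))"
  proof (intro prod_nonneg divide_nonneg_nonneg)
    fix i show "0 \<le> G (Suc i)" using Gpos[of "Suc i"] by simp
    show "0 \<le> G (Suc i) - G 0" using Gmono by (simp add: strict_mono_def less_imp_le)
  qed
  have "ennreal (exp (G 0 * t) * measure M {\<omega>\<in>space M. t < \<sigma> 0 \<omega> + (\<Sum>i<n. \<sigma> (Suc i) \<omega>)})
     = (\<integral>\<^sup>+\<omega>. ennreal (min (exp (G 0 * t)) (exp (G 0 * (\<Sum>i<n. \<sigma> (Suc i) \<omega>)))) \<partial>M)"
    using tail[of t n] by (simp add: emeasure_eq_measure ennreal_mult')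
  also have "\<dots> \<le> (\<integral>\<^sup>+\<omega>. ennreal (exp (G 0 * (\<Sum>i<n. \<sigma> (1+i) \<omega>))) \<partial>M)"
    by (intro nn_integral_mono) auto
  also have "\<dots> = ennreal (\<Prod>i<n. G (1+i) / (G (1+i) - G 0))"
    by (rule mgf_shift) (use Gmono in \<open>simp add: strict_mono_def\<close>)
  finally show ?thesis using Qpos by (simp add: ennreal_le_iff)
qed

lemma F2:
  "((\<lambda>t. exp (G 0 * t) * measure M {\<omega>\<in>space M. ennreal t < (\<Sum>j. ennreal (\<sigma> j \<omega>))})
     \<longlongrightarrow> 1 / (\<Prod>j. 1 - G 0 / G (1 + j))) at_top"
proof -
  have nu: "0 \<le> G 0" "G 0 < G 1" using Gpos[of 0] Gmono by (auto simp: strict_mono_def less_imp_le)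
  note pf = prodfacts[OF nu]
  define P where "P = (\<Prod>j. 1 - G 0 / G (1 + j))"
  have Ppos: "0 < P" using pf(2) unfolding P_def .
  define B where "B t = {\<omega>\<in>space M. ennreal t < (\<Sum>j. ennreal (\<sigma> j \<omega>))}" for t
  define A where "A n t = {\<omega>\<in>space M. t < \<sigma> 0 \<omega> + (\<Sum>i<n. \<sigma> (Suc i) \<omega>)}" for n t
  have [measurable]: "B t \<in> sets M" "A n t \<in> sets M" for n t unfolding A_def B_def by measurable
  have BU: "B t = (\<Union>n. A n t)" if "0 \<le> t" for t
    unfolding A_def B_def using Tset[OF that] by auto
  have inc: "incseq (\<lambda>n. A n t)" for t
  proof (unfold incseq_def A_def, intro allI impI subsetI)
    fix n m :: nat and x assume "n \<le> m" "x \<in> {\<omega> \<in> space M. t < \<sigma> 0 \<omega> + (\<Sum>i<n. \<sigma> (Suc i) \<omega>)}"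
    with Wmono[of n m x] show "x \<in> {\<omega> \<in> space M. t < \<sigma> 0 \<omega> + (\<Sum>i<m. \<sigma> (Suc i) \<omega>)}" by auto
  qed
  have AB: "A n t \<subseteq> B t" if "0 \<le> t" for n t using BU[OF that] by auto
  have Qle: "(\<Prod>i<n. G (Suc i) / (G (Suc i) - G 0)) \<le> 1/P" for n
    using Qfacts(2)[OF nu, of n] unfolding P_def by simp
  have up: "exp (G 0 * t) * measure M (B t) \<le> 1/P" if t: "0 \<le> t" for t
  proof -
    have mA: "measure M (A n t) \<le> exp (- G 0 * t) * (1/P)" for n
    proof -
      have "exp (G 0 * t) * measure M (A n t) \<le> 1/P"
        using F1up[of t n] Qle[of n] unfolding A_def by linarith
      then have "exp (- G 0 * t) * (exp (G 0 * t) * measure M (A n t)) \<le> exp (- G 0 * t) * (1/P)"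
        by (intro mult_left_mono) auto
      then show ?thesis by (simp add: exp_minus field_simps)
    qed
    have "emeasure M (B t) = (SUP n. emeasure M (A n t))"
      unfolding BU[OF t] by (rule SUP_emeasure_incseq[symmetric]) (use inc in auto)
    also have "\<dots> \<le> ennreal (exp (- G 0 * t) * (1/P))"
      by (intro SUP_least) (unfold emeasure_eq_measure, rule ennreal_leI, rule mA)
    finally have "ennreal (measure M (B t)) \<le> ennreal (exp (- G 0 * t) * (1/P))"
      by (simp only: emeasure_eq_measure)
    then have "measure M (B t) \<le> exp (- G 0 * t) * (1/P)"
      using Ppos by (subst (asm) ennreal_le_iff) auto
    then have "exp (G 0 * t) * measure M (B t) \<le> exp (G 0 * t) * (exp (- G 0 * t) * (1/P))"
      by (intro mult_left_mono) auto
    then show ?thesis by (simp add: exp_minus field_simps)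
  qed
  have "((\<lambda>t. exp (G 0 * t) * measure M (B t)) \<longlongrightarrow> 1/P) at_top"
  proof (rule GL)
    show "\<exists>t1. \<forall>t\<ge>t1. exp (G 0 * t) * measure M (B t) \<le> 1/P" using up by blast
  next
    fix a assume a: "a < 1/P"
    have "eventually (\<lambda>n. a < (\<Prod>i<n. G (Suc i) / (G (Suc i) - G 0))) sequentially"
      using order_tendstoD(1)[OF Qfacts(3)[OF nu], of a] a unfolding P_def by simp
    then obtain n where n: "a < (\<Prod>i<n. G (Suc i) / (G (Suc i) - G 0))"
      by (auto simp: eventually_sequentially)
    have "eventually (\<lambda>t. a < exp (G 0 * t) * measure M (A n t)) at_top"
      using order_tendstoD(1)[OF F1[of n] n] unfolding A_def .
    then obtain t0 where t0: "\<forall>t\<ge>t0. a < exp (G 0 * t) * measure M (A n t)"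
      by (auto simp: eventually_at_top_linorder)
    show "\<exists>t0. \<forall>t\<ge>t0. a < exp (G 0 * t) * measure M (B t)"
    proof (intro exI allI impI)
      fix t assume t: "max t0 0 \<le> t"
      have "measure M (A n t) \<le> measure M (B t)"
        using AB[of t n] t by (intro finite_measure_mono) auto
      then have "exp (G 0 * t) * measure M (A n t) \<le> exp (G 0 * t) * measure M (B t)"
        by (intro mult_left_mono) auto
      moreover have "a < exp (G 0 * t) * measure M (A n t)" using t0 t by simp
      ultimately show "a < exp (G 0 * t) * measure M (B t)" by linarith
    qed
  qed
  then show ?thesis unfolding B_def P_def .
qed

lemma claim1:
  shows "((\<lambda>t. measure M ({\<omega>\<in>space M. \<sigma> 0 \<omega> + (\<Sum>i<n. \<sigma> (Suc i) \<omega>) \<le> t} \<inter> {\<omega>\<in>space M. ennreal t < (\<Sum>j. ennreal (\<sigma> j \<omega>))})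
                / measure M {\<omega>\<in>space M. ennreal t < (\<Sum>j. ennreal (\<sigma> j \<omega>))})
          \<longlongrightarrow> 1 - (\<Prod>j. 1 - G 0 / G (Suc n + j))) at_top"
    and "0 < (\<Prod>j. 1 - G 0 / G (Suc n + j))" "(\<Prod>j. 1 - G 0 / G (Suc n + j)) < 1"
proof -
  have nu: "0 \<le> G 0" "G 0 < G 1" using Gpos[of 0] Gmono by (auto simp: strict_mono_def less_imp_le)
  have nu': "0 \<le> G 0" "G 0 < G (Suc n)" using Gpos[of 0] Gmono by (auto simp: strict_mono_def less_imp_le)
  note pf = prodfacts[OF nu] and pf' = prodfacts[OF nu']
  show "0 < (\<Prod>j. 1 - G 0 / G (Suc n + j))" using pf'(2) .
  show "(\<Prod>j. 1 - G 0 / G (Suc n + j)) < 1" 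
  proof -
    have "0 < G 0 / G (Suc n)" using Gpos[of 0] Gpos[of "Suc n"] by simp
    then show ?thesis using pf'(4) by simp
  qed
  define P where "P = (\<Prod>j. 1 - G 0 / G (1 + j))"
  have Ppos: "0 < P" using pf(2) unfolding P_def .
  define Q where "Q = (\<Prod>i<n. G (Suc i) / (G (Suc i) - G 0))"
  define B where "B t = {\<omega>\<in>space M. ennreal t < (\<Sum>j. ennreal (\<sigma> j \<omega>))}" for t
  define A where "A t = {\<omega>\<in>space M. t < \<sigma> 0 \<omega> + (\<Sum>i<n. \<sigma> (Suc i) \<omega>)}" for t
  have [measurable]: "B t \<in> sets M" "A t \<in> sets M" for t unfolding A_def B_def by measurable
  have AB: "A t \<subseteq> B t" if "0 \<le> t" for t unfolding A_def B_def using Tset[OF that] by auto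
  have fA: "((\<lambda>t. exp (G 0 * t) * measure M (A t)) \<longlongrightarrow> Q) at_top"
    using F1[of n] unfolding A_def Q_def .
  have fB: "((\<lambda>t. exp (G 0 * t) * measure M (B t)) \<longlongrightarrow> 1/P) at_top"
    using F2 unfolding B_def P_def .
  have QP: "Q / (1/P) = (\<Prod>j. 1 - G 0 / G (Suc n + j))"
  proof -
    have fnz: "1 - G 0 / G (1 + i) \<noteq> 0" for i
      using Gle[of 1 "1+i"] nu Gpos[of "1+i"] by (simp add: field_simps)
    have "P = (\<Prod>i. 1 - G 0 / G (1 + (i + n))) * (\<Prod>i<n. 1 - G 0 / G (1 + i))"
      unfolding P_def by (rule prodinf_split_initial_segment[OF pf(1)]) (use fnz in auto)
    moreover have "Q = 1 / (\<Prod>i<n. 1 - G 0 / G (1 + i))"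
      using Qfacts(1)[OF nu, of n] unfolding Q_def by simp
    moreover have "(\<Prod>i<n. 1 - G 0 / G (1 + i)) \<noteq> 0" using fnz by simp
    moreover have "(\<Prod>i. 1 - G 0 / G (1 + (i + n))) = (\<Prod>j. 1 - G 0 / G (Suc n + j))"
      by (rule prodinf_cong) (simp add: algebra_simps)
    ultimately show ?thesis by simp
  qed
  have lim: "((\<lambda>t. 1 - (exp (G 0 * t) * measure M (A t)) / (exp (G 0 * t) * measure M (B t))) \<longlongrightarrow> 1 - Q / (1/P)) at_top"
    using Ppos by (intro tendsto_intros fA fB) auto
  have ev: "eventually (\<lambda>t. 0 < exp (G 0 * t) * measure M (B t)) at_top"
    using order_tendstoD(1)[OF fB, of 0] Ppos by simp
  have ev2: "eventually (\<lambda>t::real. 0 \<le> t) at_top" by (rule eventually_ge_at_top)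
  have "eventually (\<lambda>t. 1 - (exp (G 0 * t) * measure M (A t)) / (exp (G 0 * t) * measure M (B t))
      = measure M ({\<omega>\<in>space M. \<sigma> 0 \<omega> + (\<Sum>i<n. \<sigma> (Suc i) \<omega>) \<le> t} \<inter> B t) / measure M (B t)) at_top"
    using ev ev2
  proof eventually_elim
    case (elim t)
    have mB: "0 < measure M (B t)" using elim(1) by (simp add: zero_less_mult_iff)
    have "{\<omega>\<in>space M. \<sigma> 0 \<omega> + (\<Sum>i<n. \<sigma> (Suc i) \<omega>) \<le> t} \<inter> B t = B t - A t"
      unfolding A_def B_def by auto
    then have "measure M ({\<omega>\<in>space M. \<sigma> 0 \<omega> + (\<Sum>i<n. \<sigma> (Suc i) \<omega>) \<le> t} \<inter> B t) = measure M (B t) - measure M (A t)"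
      using AB[OF elim(2)] by (simp add: finite_measure_Diff)
    then show ?case using mB by (simp add: field_simps)
  qed
  from Lim_transform_eventually[OF lim this] show "((\<lambda>t. measure M ({\<omega>\<in>space M. \<sigma> 0 \<omega> + (\<Sum>i<n. \<sigma> (Suc i) \<omega>) \<le> t} \<inter> {\<omega>\<in>space M. ennreal t < (\<Sum>j. ennreal (\<sigma> j \<omega>))})
                / measure M {\<omega>\<in>space M. ennreal t < (\<Sum>j. ennreal (\<sigma> j \<omega>))})
          \<longlongrightarrow> 1 - (\<Prod>j. 1 - G 0 / G (Suc n + j))) at_top"
    unfolding QP B_def .
qed

lemma Hbound:
  assumes s: "0 < s"
  shows "(\<integral>\<^sup>+\<omega>. ennreal (indicator {s<..} (\<Sum>i<n. \<sigma> (Suc i) \<omega>) * exp (G 0 * (\<Sum>i<n. \<sigma> (Suc i) \<omega>))) \<partial>M)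
      \<le> ennreal (G 1 / (G 1 - G 0) / (\<Prod>j. 1 - G 1 / G (2 + j)) * exp (- (G 1 - G 0) * s))"
proof (cases n)
  case 0
  then show ?thesis using s by simp
next
  case (Suc k)
  have d: "0 < G 1 - G 0" "G 1 < G 2" using Gmono by (auto simp: strict_mono_def)
  have nu: "0 \<le> G 1" "G 1 < G 2" using Gpos[of 1] d by auto
  note pf = prodfacts[OF nu]
  define P where "P = (\<Prod>j. 1 - G 1 / G (2 + j))"
  have Ppos: "0 < P" using pf(2) unfolding P_def .
  define c where "c = G 1 / (G 1 - G 0)"
  have cpos: "0 < c" unfolding c_def using d Gpos[of 1] by simp
  define Z where "Z = (\<lambda>\<omega>. \<Sum>j\<in>Suc ` Suc ` {..<k}. \<sigma> j \<omega>)"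
  have W: "(\<Sum>i<n. \<sigma> (Suc i) \<omega>) = \<sigma> 1 \<omega> + Z \<omega>" for \<omega>
    unfolding Suc Z_def sum.lessThan_Suc_shift by (simp add: sum.reindex)
  define g where "g = (\<lambda>p::real\<times>real. ennreal (indicator {s<..} (fst p + snd p) * exp (G 0 * (fst p + snd p))))"
  have [measurable]: "g \<in> borel_measurable (borel \<Otimes>\<^sub>M borel)" unfolding g_def by measurable
  have "(\<integral>\<^sup>+\<omega>. ennreal (indicator {s<..} (\<Sum>i<n. \<sigma> (Suc i) \<omega>) * exp (G 0 * (\<Sum>i<n. \<sigma> (Suc i) \<omega>))) \<partial>M)
      = (\<integral>\<^sup>+\<omega>. g (\<sigma> 1 \<omega>, Z \<omega>) \<partial>M)"
    unfolding W g_def by simp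
  also have "\<dots> = (\<integral>\<^sup>+\<omega>. (\<integral>\<^sup>+e. ennreal (exponential_density (G 1) e) * g (e, Z \<omega>) \<partial>lborel) \<partial>M)"
    unfolding Z_def by (rule LA0) auto
  also have "\<dots> \<le> (\<integral>\<^sup>+\<omega>. ennreal (c * exp (- (G 1 - G 0) * s)) * ennreal (exp (G 1 * Z \<omega>)) \<partial>M)"
  proof (rule nn_integral_mono)
    fix \<omega>
    define z where "z = Z \<omega>"
    have "(\<integral>\<^sup>+e. ennreal (exponential_density (G 1) e) * g (e, z) \<partial>lborel)
        = (\<integral>\<^sup>+e. (ennreal (exponential_density (G 1) e) * (indicator {s - z<..} e * ennreal (exp (G 0 * e)))) * ennreal (exp (G 0 * z)) \<partial>lborel)"
      by (rule nn_integral_cong) (auto simp: g_def indicator_def distrib_left exp_add ennreal_mult' mult_ac)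
    also have "\<dots> = (\<integral>\<^sup>+e. ennreal (exponential_density (G 1) e) * (indicator {s - z<..} e * ennreal (exp (G 0 * e))) \<partial>lborel) * ennreal (exp (G 0 * z))"
      by (rule nn_integral_multc) simp
    also have "\<dots> = ennreal (c * exp (- (G 1 - G 0) * max 0 (s - z))) * ennreal (exp (G 0 * z))"
      using exp1d[OF Gpos[of 1], of "G 0" "s - z"] d unfolding c_def by simp
    also have "\<dots> \<le> ennreal (c * exp (- (G 1 - G 0) * s)) * ennreal (exp (G 1 * z))"
    proof -
      have "exp (- (G 1 - G 0) * max 0 (s - z)) \<le> exp (- (G 1 - G 0) * (s - z))"
        using d by (subst exp_le_cancel_iff) (intro mult_left_mono_neg, auto)
      then have "c * exp (- (G 1 - G 0) * max 0 (s - z)) * exp (G 0 * z) \<le> c * exp (- (G 1 - G 0) * (s - z)) * exp (G 0 * z)"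
        using cpos by (intro mult_right_mono mult_left_mono) auto
      also have "\<dots> = c * exp (- (G 1 - G 0) * s) * exp (G 1 * z)"
        by (simp add: mult.assoc exp_add[symmetric] algebra_simps)
      finally show ?thesis using cpos by (simp add: ennreal_mult'[symmetric] ennreal_leI)
    qed
    finally show "(\<integral>\<^sup>+e. ennreal (exponential_density (G 1) e) * g (e, Z \<omega>) \<partial>lborel)
        \<le> ennreal (c * exp (- (G 1 - G 0) * s)) * ennreal (exp (G 1 * Z \<omega>))" unfolding z_def .
  qed
  also have "\<dots> = ennreal (c * exp (- (G 1 - G 0) * s)) * (\<integral>\<^sup>+\<omega>. ennreal (exp (G 1 * Z \<omega>)) \<partial>M)"
    unfolding Z_def by (rule nn_integral_cmult) simp
  also have "(\<integral>\<^sup>+\<omega>. ennreal (exp (G 1 * Z \<omega>)) \<partial>M) = ennreal (\<Prod>i<k. G (2+i) / (G (2+i) - G 1))"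
  proof -
    have "Z \<omega> = (\<Sum>i<k. \<sigma> (2+i) \<omega>)" for \<omega>
      unfolding Z_def image_image by (subst sum.reindex) (auto simp: inj_on_def)
    then show ?thesis using mgf_shift[of "G 1" 2 k] nu by simp
  qed
  also have "ennreal (c * exp (- (G 1 - G 0) * s)) * ennreal (\<Prod>i<k. G (2+i) / (G (2+i) - G 1))
      \<le> ennreal (c * exp (- (G 1 - G 0) * s)) * ennreal (1 / P)"
    using Qfacts(2)[OF nu, of k] unfolding P_def by (intro mult_left_mono ennreal_leI) auto
  also have "\<dots> = ennreal (G 1 / (G 1 - G 0) / (\<Prod>j. 1 - G 1 / G (2 + j)) * exp (- (G 1 - G 0) * s))"
    using cpos Ppos unfolding c_def P_def by (simp add: ennreal_mult'[symmetric] field_simps)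
  finally show ?thesis .
qed

lemma claim2:
  "\<exists>C. \<forall>t\<ge>0. \<forall>s>0.
     measure M ({\<omega>\<in>space M. ennreal s < (\<Sum>j. ennreal (\<sigma> (Suc j) \<omega>))} \<inter> {\<omega>\<in>space M. ennreal t < (\<Sum>j. ennreal (\<sigma> j \<omega>))})
       / measure M {\<omega>\<in>space M. ennreal t < (\<Sum>j. ennreal (\<sigma> j \<omega>))}
     \<le> C * exp (- (G 1 - G 0) * s)"
proof (intro exI allI impI)
  define C where "C = G 1 / (G 1 - G 0) / (\<Prod>j. 1 - G 1 / G (2 + j))"
  fix t s :: real assume t: "0 \<le> t" and s: "0 < s"
  define B where "B = {\<omega>\<in>space M. ennreal t < (\<Sum>j. ennreal (\<sigma> j \<omega>))}"
  define Y where "Y = {\<omega>\<in>space M. ennreal s < (\<Sum>j. ennreal (\<sigma> (Suc j) \<omega>))}"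
  define D where "D n = {\<omega>\<in>space M. s < (\<Sum>i<n. \<sigma> (Suc i) \<omega>) \<and> t < \<sigma> 0 \<omega> + (\<Sum>i<n. \<sigma> (Suc i) \<omega>)}" for n
  have [measurable]: "B \<in> sets M" "Y \<in> sets M" "D n \<in> sets M" for n
    unfolding B_def Y_def D_def by measurable
  have YB: "Y \<inter> B = (\<Union>n. D n)"
  proof (intro equalityI subsetI)
    fix x assume "x \<in> Y \<inter> B"
    then obtain n m where x: "x \<in> space M" "s < (\<Sum>i<n. \<sigma> (Suc i) x)" "t < \<sigma> 0 x + (\<Sum>i<m. \<sigma> (Suc i) x)"
      unfolding Y_def B_def using Yset[of s x] Tset[OF t, of x] s by auto
    have "s < (\<Sum>i<max n m. \<sigma> (Suc i) x)" using x(2) Wmono[of n "max n m" x] by simp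
    moreover have "t < \<sigma> 0 x + (\<Sum>i<max n m. \<sigma> (Suc i) x)" using x(3) Wmono[of m "max n m" x] by simp
    ultimately show "x \<in> (\<Union>n. D n)" using x(1) unfolding D_def by blast
  next
    fix x assume "x \<in> (\<Union>n. D n)"
    then show "x \<in> Y \<inter> B" unfolding Y_def B_def D_def using Yset[of s x] Tset[OF t, of x] s by auto
  qed
  have inc: "incseq D"
  proof (unfold incseq_def D_def, intro allI impI subsetI)
    fix n m :: nat and x assume "n \<le> m" "x \<in> {\<omega>\<in>space M. s < (\<Sum>i<n. \<sigma> (Suc i) \<omega>) \<and> t < \<sigma> 0 \<omega> + (\<Sum>i<n. \<sigma> (Suc i) \<omega>)}"
    with Wmono[of n m x] show "x \<in> {\<omega>\<in>space M. s < (\<Sum>i<m. \<sigma> (Suc i) \<omega>) \<and> t < \<sigma> 0 \<omega> + (\<Sum>i<m. \<sigma> (Suc i) \<omega>)}" by auto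
  qed
  have Dle: "emeasure M (D n) \<le> ennreal (exp (- G 0 * t) * (C * exp (- (G 1 - G 0) * s)))" for n
  proof -
    define W where "W = (\<lambda>\<omega>. \<Sum>i<n. \<sigma> (Suc i) \<omega>)"
    have W': "W \<omega> = (\<Sum>j\<in>Suc ` {..<n}. \<sigma> j \<omega>)" for \<omega> unfolding W_def by (subst sum.reindex) auto
    define g where "g = (\<lambda>p::real\<times>real. indicator {p. s < snd p \<and> t < fst p + snd p} p :: ennreal)"
    have [measurable]: "g \<in> borel_measurable (borel \<Otimes>\<^sub>M borel)" unfolding g_def by measurable
    have "emeasure M (D n) = (\<integral>\<^sup>+\<omega>. indicator (D n) \<omega> \<partial>M)" by simp
    also have "\<dots> = (\<integral>\<^sup>+\<omega>. g (\<sigma> 0 \<omega>, \<Sum>j\<in>Suc ` {..<n}. \<sigma> j \<omega>) \<partial>M)"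
    proof (rule nn_integral_cong)
      fix x assume x: "x \<in> space M"
      have Ws: "(\<Sum>j\<in>Suc ` {..<n}. \<sigma> j x) = (\<Sum>i<n. \<sigma> (Suc i) x)" by (subst sum.reindex) auto
      show "indicator (D n) x = g (\<sigma> 0 x, \<Sum>j\<in>Suc ` {..<n}. \<sigma> j x)"
        unfolding Ws using x by (simp add: g_def D_def indicator_def)
    qed
    also have "\<dots> = (\<integral>\<^sup>+\<omega>. (\<integral>\<^sup>+e. ennreal (exponential_density (G 0) e) * g (e, \<Sum>j\<in>Suc ` {..<n}. \<sigma> j \<omega>) \<partial>lborel) \<partial>M)"
      by (rule LA0) auto
    also have "\<dots> \<le> (\<integral>\<^sup>+\<omega>. ennreal (exp (- G 0 * t)) * ennreal (indicator {s<..} (W \<omega>) * exp (G 0 * W \<omega>)) \<partial>M)"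
    proof (rule nn_integral_mono)
      fix \<omega>
      define w where "w = W \<omega>"
      have "(\<integral>\<^sup>+e. ennreal (exponential_density (G 0) e) * g (e, w) \<partial>lborel)
          = (\<integral>\<^sup>+e. (ennreal (exponential_density (G 0) e) * (indicator {t - w<..} e * ennreal (exp (0 * e)))) * ennreal (indicator {s<..} w) \<partial>lborel)"
        by (rule nn_integral_cong) (auto simp: g_def indicator_def)
      also have "\<dots> = (\<integral>\<^sup>+e. ennreal (exponential_density (G 0) e) * (indicator {t - w<..} e * ennreal (exp (0 * e))) \<partial>lborel) * ennreal (indicator {s<..} w)"
        by (rule nn_integral_multc) simp
      also have "\<dots> = ennreal (exp (- G 0 * max 0 (t - w))) * ennreal (indicator {s<..} w)"
        using exp1d[OF Gpos[of 0], of 0 "t - w"] Gpos[of 0] by simp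
      also have "\<dots> \<le> ennreal (exp (- G 0 * t)) * ennreal (indicator {s<..} w * exp (G 0 * w))"
      proof -
        have "exp (- G 0 * max 0 (t - w)) \<le> exp (- G 0 * (t - w))"
          using Gpos[of 0] by (subst exp_le_cancel_iff) (intro mult_left_mono_neg, auto)
        also have "\<dots> = exp (- G 0 * t) * exp (G 0 * w)" by (simp add: exp_add[symmetric] algebra_simps)
        finally have "exp (- G 0 * max 0 (t - w)) * indicator {s<..} w \<le> exp (- G 0 * t) * (indicator {s<..} w * exp (G 0 * w))"
          by (auto simp: indicator_def)
        then show ?thesis by (simp add: ennreal_mult'[symmetric] ennreal_leI)
      qed
      finally show "(\<integral>\<^sup>+e. ennreal (exponential_density (G 0) e) * g (e, \<Sum>j\<in>Suc ` {..<n}. \<sigma> j \<omega>) \<partial>lborel)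
          \<le> ennreal (exp (- G 0 * t)) * ennreal (indicator {s<..} (W \<omega>) * exp (G 0 * W \<omega>))"
        unfolding w_def W' .
    qed
    also have "\<dots> = ennreal (exp (- G 0 * t)) * (\<integral>\<^sup>+\<omega>. ennreal (indicator {s<..} (W \<omega>) * exp (G 0 * W \<omega>)) \<partial>M)"
      unfolding W_def by (rule nn_integral_cmult) measurable
    also have "\<dots> \<le> ennreal (exp (- G 0 * t)) * ennreal (C * exp (- (G 1 - G 0) * s))"
      using Hbound[OF s, of n] unfolding W_def C_def by (intro mult_left_mono) auto
    also have "\<dots> = ennreal (exp (- G 0 * t) * (C * exp (- (G 1 - G 0) * s)))"
      by (simp add: ennreal_mult'[symmetric])
    finally show ?thesis .
  qed
  have "emeasure M (Y \<inter> B) = (SUP n. emeasure M (D n))"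
    unfolding YB by (rule SUP_emeasure_incseq[symmetric]) (use inc in auto)
  also have "\<dots> \<le> ennreal (exp (- G 0 * t) * (C * exp (- (G 1 - G 0) * s)))"
    by (intro SUP_least Dle)
  finally have "ennreal (measure M (Y \<inter> B)) \<le> ennreal (exp (- G 0 * t) * (C * exp (- (G 1 - G 0) * s)))"
    by (simp only: emeasure_eq_measure)
  then have num: "measure M (Y \<inter> B) \<le> exp (- G 0 * t) * (C * exp (- (G 1 - G 0) * s))"
  proof (subst (asm) ennreal_le_iff)
    have d: "0 < G 1 - G 0" "G 1 < G 2" using Gmono by (auto simp: strict_mono_def)
    have nu: "0 \<le> G 1" "G 1 < G 2" using Gpos[of 1] d by auto
    have "0 < C" unfolding C_def using prodfacts(2)[OF nu] d Gpos[of 1] by simp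
    then show "0 \<le> exp (- G 0 * t) * (C * exp (- (G 1 - G 0) * s))" by simp
  qed
  have den: "exp (- G 0 * t) \<le> measure M B"
  proof -
    have "{\<omega>\<in>space M. t < \<sigma> 0 \<omega>} \<subseteq> B"
      unfolding B_def using Tset[OF t] by (auto intro!: exI[of _ 0])
    then have "measure M {\<omega>\<in>space M. t < \<sigma> 0 \<omega>} \<le> measure M B"
      by (intro finite_measure_mono) auto
    moreover have "measure M {\<omega>\<in>space M. t < \<sigma> 0 \<omega>} = exp (- t * G 0)"
      using exponential_distributedD_gt[OF expo[of 0] t Gpos[of 0]] by simp
    ultimately show ?thesis by (simp add: mult.commute)
  qed
  have "0 < exp (- G 0 * t)" by simp
  then have Bpos: "0 < measure M B" using den by linarith
  have "measure M (Y \<inter> B) \<le> measure M B * (C * exp (- (G 1 - G 0) * s))"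
  proof -
    have "0 \<le> C * exp (- (G 1 - G 0) * s)"
    proof -
      have d: "0 < G 1 - G 0" "G 1 < G 2" using Gmono by (auto simp: strict_mono_def)
      have nu: "0 \<le> G 1" "G 1 < G 2" using Gpos[of 1] d by auto
      have "0 < C" unfolding C_def using prodfacts(2)[OF nu] d Gpos[of 1] by simp
      then show ?thesis by simp
    qed
    then show ?thesis using num den by (meson mult_right_mono order_trans)
  qed
  then show "measure M (Y \<inter> B) / measure M B \<le> C * exp (- (G 1 - G 0) * s)"
    using Bpos by (simp add: divide_le_eq mult.commute)
qed

end


lemma ennreal_max0: "ennreal (max 0 x) = ennreal x"
  by (cases "0 \<le> x") (auto simp: max_def ennreal_neg)

lemma Xi_gt: "(enat x < birth_Xi n0 \<tau> t \<omega>) \<longleftrightarrow> (\<forall>k. n0 \<le> k \<and> k \<le> x \<longrightarrow> (\<Sum>l=n0..k. \<tau> l \<omega>) \<le> t)"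
proof (cases "\<exists>k\<ge>n0. (\<Sum>l=n0..k. \<tau> l \<omega>) > t")
  case True
  let ?P = "\<lambda>k. k \<ge> n0 \<and> (\<Sum>l=n0..k. \<tau> l \<omega>) > t"
  have "enat x < birth_Xi n0 \<tau> t \<omega> \<longleftrightarrow> x < (LEAST k. ?P k)"
    using True unfolding birth_Xi_def by simp
  also have "\<dots> \<longleftrightarrow> (\<forall>k\<le>x. \<not> ?P k)"
  proof
    assume "x < (LEAST k. ?P k)"
    then show "\<forall>k\<le>x. \<not> ?P k" using not_less_Least by (metis le_less_trans)
  next
    assume h: "\<forall>k\<le>x. \<not> ?P k"
    from True have "?P (LEAST k. ?P k)" by (metis (mono_tags, lifting) LeastI)
    then show "x < (LEAST k. ?P k)" using h by (meson not_le)
  qed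
  also have "\<dots> \<longleftrightarrow> (\<forall>k. n0 \<le> k \<and> k \<le> x \<longrightarrow> (\<Sum>l=n0..k. \<tau> l \<omega>) \<le> t)"
    by (auto simp: not_less)
  finally show ?thesis .
next
  case False
  then show ?thesis unfolding birth_Xi_def by (auto simp: not_less)
qed

lemma (in prob_space) indep_sets_reindex:
  assumes ind: "indep_sets F (h ` I)" and inj: "inj_on h I"
  shows "indep_sets (\<lambda>i. F (h i)) I"
  unfolding indep_sets_def
proof (intro conjI ballI allI impI)
  fix i assume "i \<in> I" then show "F (h i) \<subseteq> events" using ind unfolding indep_sets_def by auto
next
  fix J A assume J: "J \<subseteq> I" "J \<noteq> {}" "finite J" and A: "A \<in> Pi J (\<lambda>i. F (h i))"
  have injJ: "inj_on h J" using inj J(1) by (rule inj_on_subset)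
  define A' where "A' = (\<lambda>j. A (the_inv_into J h j))"
  have A'h: "A' (h i) = A i" if "i \<in> J" for i
    unfolding A'_def using the_inv_into_f_f[OF injJ that] by simp
  have "A' \<in> Pi (h ` J) F" using A A'h by auto
  moreover have "h ` J \<subseteq> h ` I" "h ` J \<noteq> {}" "finite (h ` J)" using J by auto
  ultimately have "prob (\<Inter>j\<in>h ` J. A' j) = (\<Prod>j\<in>h ` J. prob (A' j))"
    using ind unfolding indep_sets_def by blast
  moreover have "(\<Inter>j\<in>h ` J. A' j) = (\<Inter>i\<in>J. A i)" using A'h by auto
  moreover have "(\<Prod>j\<in>h ` J. prob (A' j)) = (\<Prod>i\<in>J. prob (A i))"
    using A'h by (simp add: prod.reindex[OF injJ])
  ultimately show "prob (\<Inter>i\<in>J. A i) = (\<Prod>i\<in>J. prob (A i))" by simp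
qed

lemma (in prob_space) indep_vars_shift:
  assumes "indep_vars (\<lambda>_. borel) X {n0..}"
  shows "indep_vars (\<lambda>_. borel) (\<lambda>j. X (n0 + j)) (UNIV :: nat set)"
proof -
  have im: "(+) n0 ` UNIV = {n0..}"
  proof (intro equalityI subsetI)
    fix x :: nat assume "x \<in> {n0..}"
    then have "x = n0 + (x - n0)" by simp
    then show "x \<in> (+) n0 ` UNIV" by blast
  qed auto
  from assms show ?thesis
    unfolding indep_vars_def2 im[symmetric]
    using indep_sets_reindex[of "\<lambda>i. {X i -` A \<inter> space M |A. A \<in> sets borel}" "(+) n0" UNIV]
    by auto
qed


theorem proposition1:
  fixes M :: "'a measure" and F :: "nat \<Rightarrow> real" and \<tau> :: "nat \<Rightarrow> 'a \<Rightarrow> real" and n0 :: nat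
  assumes "prob_space M"
    and Fpos: "\<forall>k\<ge>1. F k > 0"
    and Fmono: "strict_mono_on {1..} F \<or> monotone_on {1..} (<) (>) F"
    and Fsum: "summable (\<lambda>k. 1 / F (k + 1))"
    and n0: "n0 \<ge> 1"
    and indep: "prob_space.indep_vars M (\<lambda>_. borel) \<tau> {n0..}"
    and expo: "\<forall>k\<ge>n0. distributed M lborel (\<tau> k) (exponential_density (F k))"
  shows "(\<forall>x\<ge>n0.
            ((\<lambda>t. cprob M {\<omega>\<in>space M. birth_Xi n0 \<tau> t \<omega> > enat x}
                           {\<omega>\<in>space M. birth_T n0 \<tau> \<omega> > ennreal t})
              \<longlongrightarrow> 1 - (\<Prod>j. 1 - F n0 / F (x + 1 + j))) at_top
          \<and> 1 - (\<Prod>j. 1 - F n0 / F (x + 1 + j)) \<in> {0<..<1})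
       \<and> (\<exists>C t1. \<forall>t\<ge>t1. \<forall>s>0.
            cprob M {\<omega>\<in>space M. birth_T n0 \<tau> \<omega> - ennreal (\<tau> n0 \<omega>) > ennreal s}
                    {\<omega>\<in>space M. birth_T n0 \<tau> \<omega> > ennreal t}
              \<le> C * exp (- (F (n0 + 1) - F n0) * s))"
proof -
  interpret prob_space M using assms(1) .
  have smono: "strict_mono_on {1..} F"
  proof (rule ccontr)
    assume "\<not> strict_mono_on {1..} F"
    then have dec: "monotone_on {1..} (<) (>) F" using Fmono by blast
    have F1: "0 < F 1" using Fpos by simp
    have "(\<lambda>k. 1 / F (k + 1)) \<longlonglongrightarrow> 0" using Fsum by (rule summable_LIMSEQ_zero)
    then have "eventually (\<lambda>k. 1 / F (k+1) < 1 / F 1) sequentially"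
      using F1 by (intro order_tendstoD(2)) auto
    then obtain k where k: "1 / F (k+1) < 1 / F 1" by (auto simp: eventually_sequentially)
    have "F (k+1) \<le> F 1"
    proof (cases k)
      case 0 then show ?thesis by simp
    next
      case (Suc m) then have "F 1 > F (k+1)" using dec by (auto simp: monotone_on_def)
      then show ?thesis by simp
    qed
    moreover have "0 < F (k+1)" using Fpos by simp
    ultimately have "1 / F 1 \<le> 1 / F (k+1)" using F1 by (intro divide_left_mono) auto
    with k show False by simp
  qed
  define G where "G j = F (n0 + j)" for j
  define \<sigma> where "\<sigma> j \<omega> = max 0 (\<tau> (n0 + j) \<omega>)" for j \<omega>
  have Gpos: "0 < G j" for j using Fpos n0 unfolding G_def by simp
  have Gmono: "strict_mono G" unfolding strict_mono_def G_def
    using smono n0 by (auto intro!: strict_mono_onD[OF smono])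
  have Gsum: "summable (\<lambda>j. 1 / G j)"
  proof -
    have "summable (\<lambda>k. 1 / F (k + (n0 - 1) + 1))"
      using summable_ignore_initial_segment[OF Fsum, of "n0 - 1"] by simp
    moreover have "k + (n0 - 1) + 1 = n0 + k" for k using n0 by simp
    ultimately show ?thesis unfolding G_def by (simp add: add.commute)
  qed
  have tau_meas: "\<tau> k \<in> borel_measurable M" if "n0 \<le> k" for k
    using distributed_measurable[of M lborel "\<tau> k"] expo that by auto
  have ind\<sigma>: "indep_vars (\<lambda>_. borel) \<sigma> UNIV"
  proof -
    have "indep_vars (\<lambda>_. borel) (\<lambda>k \<omega>. max 0 (\<tau> k \<omega>)) {n0..}"
      using indep_vars_compose2[OF indep, of "\<lambda>k x. max 0 x" "\<lambda>_. borel"] by auto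
    from indep_vars_shift[OF this] show ?thesis unfolding \<sigma>_def .
  qed
  have expo\<sigma>: "distributed M lborel (\<sigma> j) (exponential_density (G j))" for j
  proof -
    have D: "distributed M lborel (\<tau> (n0+j)) (exponential_density (G j))" using expo unfolding G_def by simp
    have l: "0 < G j" by (rule Gpos)
    from D have h: "\<tau> (n0+j) \<in> borel_measurable M \<and> (\<forall>a\<ge>0. \<P>(x in M. \<tau> (n0+j) x \<le> a) = 1 - exp (- a * G j))"
      using exponential_distributed_iff[OF l] by blast
    have "\<sigma> j \<in> borel_measurable M" unfolding \<sigma>_def using h by (intro borel_measurable_max) auto
    moreover have "\<P>(x in M. \<sigma> j x \<le> a) = 1 - exp (- a * G j)" if "0 \<le> a" for a
      using h that unfolding \<sigma>_def by simp
    ultimately show ?thesis using exponential_distributed_iff[OF l] by blast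
  qed
  interpret B: bp M G \<sigma>
    using Gpos Gmono Gsum ind\<sigma> expo\<sigma> by unfold_locales (auto simp: \<sigma>_def)
  note B.meas[measurable]
  have T\<sigma>: "birth_T n0 \<tau> \<omega> = (\<Sum>j. ennreal (\<sigma> j \<omega>))" for \<omega>
    unfolding birth_T_def \<sigma>_def ennreal_max0 ..
  have AEnn: "AE \<omega> in M. \<forall>k. n0 \<le> k \<longrightarrow> 0 \<le> \<tau> k \<omega>"
  proof (subst AE_all_countable, intro allI)
    fix k
    show "AE \<omega> in M. n0 \<le> k \<longrightarrow> 0 \<le> \<tau> k \<omega>"
    proof (cases "n0 \<le> k")
      case True
      have D: "distributed M lborel (\<tau> k) (exponential_density (F k))" using expo True by simp
      have "(AE \<omega> in M. 0 \<le> \<tau> k \<omega>) \<longleftrightarrow> (AE x in lborel. 0 < ennreal (exponential_density (F k) x) \<longrightarrow> 0 \<le> x)"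
        by (rule distributed_AE2[OF D]) simp
      moreover have "AE x in lborel. 0 < ennreal (exponential_density (F k) x) \<longrightarrow> 0 \<le> x"
        by (intro AE_I2) (auto simp: exponential_density_def erlang_density_def)
      ultimately show ?thesis by simp
    qed simp
  qed
  define Bs where "Bs t = {\<omega>\<in>space M. ennreal t < (\<Sum>j. ennreal (\<sigma> j \<omega>))}" for t
  have Bs_meas[measurable]: "Bs t \<in> sets M" for t unfolding Bs_def by measurable
  have eqT: "{\<omega>\<in>space M. birth_T n0 \<tau> \<omega> > ennreal t} = Bs t" for t
    unfolding Bs_def T\<sigma> by simp
  have part1: "\<forall>x\<ge>n0.
            ((\<lambda>t. cprob M {\<omega>\<in>space M. birth_Xi n0 \<tau> t \<omega> > enat x}
                           {\<omega>\<in>space M. birth_T n0 \<tau> \<omega> > ennreal t})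
              \<longlongrightarrow> 1 - (\<Prod>j. 1 - F n0 / F (x + 1 + j))) at_top
          \<and> 1 - (\<Prod>j. 1 - F n0 / F (x + 1 + j)) \<in> {0<..<1}"
  proof (intro allI impI conjI)
    fix x assume x: "n0 \<le> x"
    define n where "n = x - n0"
    have xn: "x = n0 + n" using x n_def by simp
    have prodeq: "(\<Prod>j. 1 - F n0 / F (x + 1 + j)) = (\<Prod>j. 1 - G 0 / G (Suc n + j))"
      unfolding G_def xn by (rule prodinf_cong) (simp add: algebra_simps)
    show "1 - (\<Prod>j. 1 - F n0 / F (x + 1 + j)) \<in> {0<..<1}"
      using B.claim1(2,3)[of n] unfolding prodeq by simp
    define S where "S k \<omega> = (\<Sum>l=n0..k. \<tau> l \<omega>)" for k \<omega>
    have S_meas[measurable]: "S k \<in> borel_measurable M" for k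
      unfolding S_def by (intro borel_measurable_sum) (auto intro: tau_meas)
    have setXi: "{\<omega>\<in>space M. birth_Xi n0 \<tau> t \<omega> > enat x} = {\<omega>\<in>space M. \<forall>k\<in>{n0..x}. S k \<omega> \<le> t}" for t
      unfolding S_def using Xi_gt[of x n0 \<tau>] by auto
    have m1[measurable]: "{\<omega>\<in>space M. \<forall>k\<in>{n0..x}. S k \<omega> \<le> t} \<in> sets M" for t by measurable
    have ae: "AE \<omega> in M. (\<omega> \<in> {\<omega>\<in>space M. \<forall>k\<in>{n0..x}. S k \<omega> \<le> t} \<inter> Bs t)
               \<longleftrightarrow> (\<omega> \<in> {\<omega>\<in>space M. \<sigma> 0 \<omega> + (\<Sum>i<n. \<sigma> (Suc i) \<omega>) \<le> t} \<inter> Bs t)" for t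
      using AEnn
    proof eventually_elim
      case (elim \<omega>)
      have "S x \<omega> = (\<Sum>i\<le>n. \<tau> (n0 + i) \<omega>)"
        unfolding S_def xn using sum.shift_bounds_cl_nat_ivl[of "\<lambda>l. \<tau> l \<omega>" 0 n0 n]
        by (simp add: atLeast0AtMost add.commute)
      also have "\<dots> = (\<Sum>i<Suc n. \<sigma> i \<omega>)"
        unfolding lessThan_Suc_atMost using elim by (intro sum.cong) (auto simp: \<sigma>_def)
      also have "\<dots> = \<sigma> 0 \<omega> + (\<Sum>i<n. \<sigma> (Suc i) \<omega>)" by (rule sum.lessThan_Suc_shift)
      finally have Sx: "S x \<omega> = \<sigma> 0 \<omega> + (\<Sum>i<n. \<sigma> (Suc i) \<omega>)" .
      have "(\<forall>k\<in>{n0..x}. S k \<omega> \<le> t) \<longleftrightarrow> S x \<omega> \<le> t"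
      proof
        assume h: "S x \<omega> \<le> t"
        show "\<forall>k\<in>{n0..x}. S k \<omega> \<le> t"
        proof
          fix k assume k: "k \<in> {n0..x}"
          have "S k \<omega> \<le> S x \<omega>" unfolding S_def
            using k elim by (intro sum_mono2) auto
          then show "S k \<omega> \<le> t" using h by simp
        qed
      qed (use x in auto)
      then show ?case using Sx by auto
    qed
    have meq: "measure M ({\<omega>\<in>space M. birth_Xi n0 \<tau> t \<omega> > enat x} \<inter> {\<omega>\<in>space M. birth_T n0 \<tau> \<omega> > ennreal t})
        = measure M ({\<omega>\<in>space M. \<sigma> 0 \<omega> + (\<Sum>i<n. \<sigma> (Suc i) \<omega>) \<le> t} \<inter> Bs t)" for t
      unfolding setXi eqT by (rule measure_eq_AE[OF ae]) measurable
    show "((\<lambda>t. cprob M {\<omega>\<in>space M. birth_Xi n0 \<tau> t \<omega> > enat x}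
                           {\<omega>\<in>space M. birth_T n0 \<tau> \<omega> > ennreal t})
              \<longlongrightarrow> 1 - (\<Prod>j. 1 - F n0 / F (x + 1 + j))) at_top"
      unfolding cprob_def meq unfolding prodeq eqT using B.claim1(1)[of n] unfolding Bs_def .
  qed
  have part2: "\<exists>C t1. \<forall>t\<ge>t1. \<forall>s>0.
            cprob M {\<omega>\<in>space M. birth_T n0 \<tau> \<omega> - ennreal (\<tau> n0 \<omega>) > ennreal s}
                    {\<omega>\<in>space M. birth_T n0 \<tau> \<omega> > ennreal t}
              \<le> C * exp (- (F (n0 + 1) - F n0) * s)"
  proof -
    obtain C where C: "\<forall>t\<ge>0. \<forall>s>0.
     measure M ({\<omega>\<in>space M. ennreal s < (\<Sum>j. ennreal (\<sigma> (Suc j) \<omega>))} \<inter> {\<omega>\<in>space M. ennreal t < (\<Sum>j. ennreal (\<sigma> j \<omega>))})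
       / measure M {\<omega>\<in>space M. ennreal t < (\<Sum>j. ennreal (\<sigma> j \<omega>))}
     \<le> C * exp (- (G 1 - G 0) * s)" using B.claim2 by blast
    have Ydiff: "birth_T n0 \<tau> \<omega> - ennreal (\<tau> n0 \<omega>) = (\<Sum>j. ennreal (\<sigma> (Suc j) \<omega>))" for \<omega>
    proof -
      have "(\<Sum>j. ennreal (\<sigma> j \<omega>)) = (\<Sum>j. ennreal (\<sigma> (j + 1) \<omega>)) + (\<Sum>j<1. ennreal (\<sigma> j \<omega>))"
        by (rule suminf_offset) simp
      moreover have "ennreal (\<tau> n0 \<omega>) = ennreal (\<sigma> 0 \<omega>)" unfolding \<sigma>_def ennreal_max0 by simp
      ultimately show ?thesis unfolding T\<sigma> by simp
    qed
    have "\<forall>t\<ge>0. \<forall>s>0.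
            cprob M {\<omega>\<in>space M. birth_T n0 \<tau> \<omega> - ennreal (\<tau> n0 \<omega>) > ennreal s}
                    {\<omega>\<in>space M. birth_T n0 \<tau> \<omega> > ennreal t}
              \<le> C * exp (- (F (n0 + 1) - F n0) * s)"
      using C unfolding cprob_def Ydiff eqT Bs_def G_def by simp
    then show ?thesis by blast
  qed
  from part1 part2 show ?thesis by blast
qed

end
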